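(* Let $\tau>\frac{3+\sqrt{17}}{2}$, $\gamma>0$, $\alpha\in D_{\gamma,\tau}$ with convergents $p_n/q_n$. Suppose that $\alpha-\frac{p_n}{q_n}>\frac{\gamma}{q_n^{\tau+1}}$ for every even $n$, and that for infinitely many even $m$ one has, for all even $n<m$, $$\frac{p_n}{q_n}+\frac{\gamma}{q_n^{\tau+1}}<\frac{p_m}{q_m}-\frac{\gamma}{q_m^{\tau+1}}-\frac{2\gamma}{q_m^{\tau-1}}.$$ Then $\alpha$ is an accumulation point of $D_{\gamma,\tau}$.
   Context: For $x\in\mathbb{R}$, $\|x\|:=\min_{p\in\mathbb{Z}}|x-p|$; $\mathbb{N}=\{1,2,\dots\}$. For $\gamma>0,\tau\ge1$, $D_{\gamma,\tau}:=\{\alpha\in(0,1): \|q\alpha\|\ge\gamma/q^\tau\ \forall q\in\mathbb{N}\}$; its elements are irrational. For irrational $\alpha\in(0,1)$ write $\alpha=\cfrac{1}{a_1+\cfrac{1}{a_2+\cdots}}$, and let $p_n/q_n$ ($n\ge0$) be its convergents: $p_{-1}=1,q_{-1}=0,p_0=0,q_0=1$, $p_n=a_np_{n-1}+p_{n-2}$, $q_n=a_nq_{n-1}+q_{n-2}$. Even-indexed convergents lie below $\alpha$. *)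

theory Defs
  imports "HOL-Analysis.Analysis"
begin

definition dist_int :: "real \<Rightarrow> real" where
  "dist_int x = (INF p\<in>(\<int>::real set). \<bar>x - p\<bar>)"

definition Dioph :: "real \<Rightarrow> real \<Rightarrow> real set" where
  "Dioph \<gamma> \<tau> = {\<alpha>. 0 < \<alpha> \<and> \<alpha> < 1 \<and>
      (\<forall>q::nat. q \<ge> 1 \<longrightarrow> dist_int (real q * \<alpha>) \<ge> \<gamma> / real q powr \<tau>)}"

fun cf_rem :: "real \<Rightarrow> nat \<Rightarrow> real" where
  "cf_rem \<alpha> 0 = \<alpha>"
| "cf_rem \<alpha> (Suc n) = 1 / cf_rem \<alpha> n - of_int \<lfloor>1 / cf_rem \<alpha> n\<rfloor>"

text \<open>Partial quotients a_n for n >= 1: alpha = 1/(a_1 + 1/(a_2 + ...)).\<close>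
definition cf_a :: "real \<Rightarrow> nat \<Rightarrow> int" where
  "cf_a \<alpha> n = \<lfloor>1 / cf_rem \<alpha> (n - 1)\<rfloor>"

text \<open>Convergents, shifted by one: cf_pq alpha n = (p_{n-1}, q_{n-1}),
  so that cf_pq alpha 0 = (p_{-1}, q_{-1}) = (1, 0), cf_pq alpha 1 = (p_0,q_0) = (0,1).\<close>
fun cf_pq :: "real \<Rightarrow> nat \<Rightarrow> int \<times> int" where
  "cf_pq \<alpha> 0 = (1, 0)"
| "cf_pq \<alpha> (Suc 0) = (0, 1)"
| "cf_pq \<alpha> (Suc (Suc n)) =
     (cf_a \<alpha> (Suc n) * fst (cf_pq \<alpha> (Suc n)) + fst (cf_pq \<alpha> n),
      cf_a \<alpha> (Suc n) * snd (cf_pq \<alpha> (Suc n)) + snd (cf_pq \<alpha> n))"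

definition cf_p :: "real \<Rightarrow> nat \<Rightarrow> int" where
  "cf_p \<alpha> n = fst (cf_pq \<alpha> (Suc n))"

definition cf_q :: "real \<Rightarrow> nat \<Rightarrow> int" where
  "cf_q \<alpha> n = snd (cf_pq \<alpha> (Suc n))"

end

theory Submission
  imports Defs
begin

lemma rem_irrat: assumes "\<alpha> \<notin> \<rat>" shows "cf_rem \<alpha> k \<notin> \<rat>"
proof (induction k)
  case 0 then show ?case using assms by simp
next
  case (Suc k)
  show ?case
  proof
    assume "cf_rem \<alpha> (Suc k) \<in> \<rat>"
    then have "1 / cf_rem \<alpha> k \<in> \<rat>"
      by (metis Rats_add Rats_of_int cf_rem.simps(2) diff_add_cancel)
    then have "cf_rem \<alpha> k \<in> \<rat>"
      by (metis Rats_inverse inverse_eq_divide inverse_inverse_eq)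
    with Suc show False by simp
  qed
qed

lemma rem_bounds: assumes "\<alpha> \<notin> \<rat>" "0 < \<alpha>" "\<alpha> < 1" shows "0 < cf_rem \<alpha> k \<and> cf_rem \<alpha> k < 1"
proof (cases k)
  case 0 then show ?thesis using assms by simp
next
  case (Suc j)
  have ir: "cf_rem \<alpha> (Suc j) \<notin> \<rat>" using rem_irrat assms by blast
  have "cf_rem \<alpha> (Suc j) \<noteq> 0" using ir by auto
  moreover have "cf_rem \<alpha> (Suc j) \<ge> 0" "cf_rem \<alpha> (Suc j) < 1"
    by (simp_all add: floor_le_iff) linarith
  ultimately have "0 < cf_rem \<alpha> (Suc j)" "cf_rem \<alpha> (Suc j) < 1"
    by (metis order_le_neq_trans) (rule \<open>cf_rem \<alpha> (Suc j) < 1\<close>)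
  then show ?thesis using Suc by simp
qed

definition PP :: "real \<Rightarrow> nat \<Rightarrow> real" where "PP \<alpha> k = of_int (fst (cf_pq \<alpha> k))"
definition QQ :: "real \<Rightarrow> nat \<Rightarrow> real" where "QQ \<alpha> k = of_int (snd (cf_pq \<alpha> k))"

lemma PP_simps: "PP \<alpha> 0 = 1" "PP \<alpha> (Suc 0) = 0"
  "PP \<alpha> (Suc (Suc k)) = of_int \<lfloor>1 / cf_rem \<alpha> k\<rfloor> * PP \<alpha> (Suc k) + PP \<alpha> k"
  by (simp_all add: PP_def cf_a_def)
lemma QQ_simps: "QQ \<alpha> 0 = 0" "QQ \<alpha> (Suc 0) = 1"
  "QQ \<alpha> (Suc (Suc k)) = of_int \<lfloor>1 / cf_rem \<alpha> k\<rfloor> * QQ \<alpha> (Suc k) + QQ \<alpha> k"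
  by (simp_all add: QQ_def cf_a_def)

lemma cfp_PP: "real_of_int (cf_p \<alpha> n) = PP \<alpha> (Suc n)" by (simp add: PP_def cf_p_def)
lemma cfq_QQ: "real_of_int (cf_q \<alpha> n) = QQ \<alpha> (Suc n)" by (simp add: QQ_def cf_q_def)

context
  fixes \<alpha> :: real
  assumes irr: "\<alpha> \<notin> \<rat>" and a0: "0 < \<alpha>" and a1: "\<alpha> < 1"
begin

lemma r_pos: "0 < cf_rem \<alpha> k" and r_lt1: "cf_rem \<alpha> k < 1"
  using rem_bounds[OF irr a0 a1] by auto

lemma a_ge1: "of_int \<lfloor>1 / cf_rem \<alpha> k\<rfloor> \<ge> (1::real)"
proof -
  have "1 / cf_rem \<alpha> k \<ge> 1" using r_pos[of k] r_lt1[of k] by simp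
  then show ?thesis by (simp add: le_floor_iff)
qed

lemma QQ_basic: "QQ \<alpha> k \<ge> 0 \<and> QQ \<alpha> (Suc k) \<ge> 1 \<and> QQ \<alpha> (Suc k) \<ge> QQ \<alpha> k"
proof (induction k)
  case 0 then show ?case by (simp add: QQ_simps)
next
  case (Suc k)
  have "QQ \<alpha> (Suc (Suc k)) \<ge> 1 * QQ \<alpha> (Suc k) + QQ \<alpha> k"
    unfolding QQ_simps using a_ge1[of k] Suc by (intro add_mono mult_right_mono) auto
  then show ?case using Suc by auto
qed

lemma QQ_nonneg: "QQ \<alpha> k \<ge> 0" using QQ_basic by blast
lemma QQ_ge1: "k \<ge> 1 \<Longrightarrow> QQ \<alpha> k \<ge> 1" using QQ_basic[of "k - 1"] by simp
lemma QQ_mono: "k \<le> l \<Longrightarrow> QQ \<alpha> k \<le> QQ \<alpha> l"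
  by (induction l rule: dec_induct) (use QQ_basic order_trans in blast)+

lemma QQ_grow: "real k \<le> 2 * QQ \<alpha> k"
proof (induction k rule: less_induct)
  case (less k)
  show ?case
  proof (cases k)
    case 0 then show ?thesis by (simp add: QQ_simps)
  next
    case (Suc j)
    show ?thesis
    proof (cases j)
      case 0 then show ?thesis using Suc by (simp add: QQ_simps)
    next
      case (Suc i)
      have "QQ \<alpha> (Suc (Suc i)) \<ge> 1 * QQ \<alpha> (Suc i) + QQ \<alpha> i"
        unfolding QQ_simps using a_ge1[of i] QQ_basic[of i] by (intro add_mono mult_right_mono) auto
      moreover have "QQ \<alpha> (Suc i) \<ge> 1" using QQ_basic[of i] by blast
      moreover have "real i \<le> 2 * QQ \<alpha> i" using less \<open>k = Suc j\<close> Suc by simp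
      ultimately show ?thesis using \<open>k = Suc j\<close> Suc by simp
    qed
  qed
qed

lemma det: "PP \<alpha> (Suc k) * QQ \<alpha> k - PP \<alpha> k * QQ \<alpha> (Suc k) = (-1) ^ (Suc k)"
proof (induction k)
  case 0 then show ?case by (simp add: PP_simps QQ_simps)
next
  case (Suc k)
  then show ?case by (simp add: PP_simps QQ_simps algebra_simps)
qed

lemma formula: "QQ \<alpha> (Suc k) + QQ \<alpha> k * cf_rem \<alpha> k > 0 \<and>
   \<alpha> * (QQ \<alpha> (Suc k) + QQ \<alpha> k * cf_rem \<alpha> k) = PP \<alpha> (Suc k) + PP \<alpha> k * cf_rem \<alpha> k"
proof (induction k)
  case 0 then show ?case by (simp add: PP_simps QQ_simps)
next
  case (Suc k)
  define r where "r = cf_rem \<alpha> k"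
  define s where "s = cf_rem \<alpha> (Suc k)"
  define a :: real where "a = of_int \<lfloor>1 / r\<rfloor>"
  have r0: "r > 0" using r_pos r_def by blast
  have s0: "s > 0" using r_pos s_def by blast
  have rs: "r = 1 / (a + s)" using r0 by (simp add: s_def r_def a_def)
  have as: "a + s > 0" using a_ge1[of k] s0 unfolding a_def r_def by linarith
  have pos: "QQ \<alpha> (Suc (Suc k)) + QQ \<alpha> (Suc k) * s > 0"
    using QQ_basic[of k] QQ_basic[of "Suc k"] s0 by (smt (verit) mult_nonneg_nonneg)
  have IH: "\<alpha> * (QQ \<alpha> (Suc k) + QQ \<alpha> k * r) = PP \<alpha> (Suc k) + PP \<alpha> k * r"
    using Suc r_def by blast
  have "\<alpha> * (QQ \<alpha> (Suc k) * (a + s) + QQ \<alpha> k) = PP \<alpha> (Suc k) * (a+s) + PP \<alpha> k"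
    using IH as unfolding rs by (simp add: field_simps)
  then have "\<alpha> * (QQ \<alpha> (Suc (Suc k)) + QQ \<alpha> (Suc k) * s) = PP \<alpha> (Suc (Suc k)) + PP \<alpha> (Suc k) * s"
    unfolding PP_simps QQ_simps a_def[unfolded r_def, symmetric] by (simp add: algebra_simps)
  then show ?case using pos s_def by simp
qed

definition E :: "nat \<Rightarrow> real" where "E k = QQ \<alpha> k * \<alpha> - PP \<alpha> k"

lemma E_eq: "E (Suc k) * (QQ \<alpha> (Suc (Suc k)) + QQ \<alpha> (Suc k) * cf_rem \<alpha> (Suc k)) = (-1) ^ k"
proof -
  have f: "\<alpha> * (QQ \<alpha> (Suc (Suc k)) + QQ \<alpha> (Suc k) * cf_rem \<alpha> (Suc k)) = PP \<alpha> (Suc (Suc k)) + PP \<alpha> (Suc k) * cf_rem \<alpha> (Suc k)"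
    using formula by blast
  have d: "PP \<alpha> (Suc (Suc k)) * QQ \<alpha> (Suc k) - PP \<alpha> (Suc k) * QQ \<alpha> (Suc (Suc k)) = (-1) ^ k"
    using det[of "Suc k"] by simp
  have "E (Suc k) * (QQ \<alpha> (Suc (Suc k)) + QQ \<alpha> (Suc k) * cf_rem \<alpha> (Suc k))
     = QQ \<alpha> (Suc k) * (\<alpha> * (QQ \<alpha> (Suc (Suc k)) + QQ \<alpha> (Suc k) * cf_rem \<alpha> (Suc k)))
       - PP \<alpha> (Suc k) * (QQ \<alpha> (Suc (Suc k)) + QQ \<alpha> (Suc k) * cf_rem \<alpha> (Suc k))"
    by (simp add: E_def algebra_simps)
  also have "\<dots> = (-1)^k" unfolding f using d by (simp add: algebra_simps)
  finally show ?thesis .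
qed

lemma E_sign: "(-1) ^ k * E (Suc k) > 0"
proof -
  have "QQ \<alpha> (Suc (Suc k)) + QQ \<alpha> (Suc k) * cf_rem \<alpha> (Suc k) > 0" using formula by blast
  moreover have "(-1)^k * (E (Suc k) * (QQ \<alpha> (Suc (Suc k)) + QQ \<alpha> (Suc k) * cf_rem \<alpha> (Suc k))) = 1"
    unfolding E_eq by (simp flip: power_mult_distrib)
  ultimately show ?thesis by (metis mult.assoc zero_less_mult_pos2 zero_less_one)
qed

lemma E_abs: "\<bar>E (Suc k)\<bar> < 1 / QQ \<alpha> (Suc (Suc k))"
proof -
  define D where "D = QQ \<alpha> (Suc (Suc k)) + QQ \<alpha> (Suc k) * cf_rem \<alpha> (Suc k)"
  have "QQ \<alpha> (Suc k) * cf_rem \<alpha> (Suc k) > 0" using QQ_ge1[of "Suc k"] r_pos[of "Suc k"] by simp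
  then have DQ: "D > QQ \<alpha> (Suc (Suc k))" unfolding D_def by simp
  have Q1: "QQ \<alpha> (Suc (Suc k)) \<ge> 1" using QQ_ge1 by simp
  have "\<bar>E (Suc k) * D\<bar> = 1" using E_eq[of k] unfolding D_def[symmetric] by (simp add: power_abs)
  then have "\<bar>E (Suc k)\<bar> * D = 1" using DQ Q1 by (simp add: abs_mult)
  then have "\<bar>E (Suc k)\<bar> = 1 / D" using DQ Q1 by (simp add: field_simps)
  then show ?thesis using DQ Q1 by (simp add: frac_less2)
qed

lemma best_approx:
  fixes p q :: int
  assumes q0: "0 < q" and qlt: "real_of_int q < QQ \<alpha> (Suc (Suc n))"
  shows "\<bar>E (Suc n)\<bar> \<le> \<bar>of_int q * \<alpha> - of_int p\<bar>"
proof -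
  define a where "a = fst (cf_pq \<alpha> (Suc n))"
  define b where "b = snd (cf_pq \<alpha> (Suc n))"
  define c where "c = fst (cf_pq \<alpha> (Suc (Suc n)))"
  define d where "d = snd (cf_pq \<alpha> (Suc (Suc n)))"
  define s :: int where "s = (-1) ^ n"
  have ss: "s * s = 1" unfolding s_def by (simp flip: power_mult_distrib)
  have detr: "real_of_int (c * b - a * d) = of_int s" using det[of "Suc n"]
    by (simp add: PP_def QQ_def a_def b_def c_def d_def s_def)
  then have deti: "c * b - a * d = s" using of_int_eq_iff by blast
  define u where "u = s * (q * c - p * d)"
  define v where "v = s * (p * b - q * a)"
  have pu: "u * a + v * c = p"
  proof -
    have "u * a + v * c = s * p * (c * b - a * d)" by (simp add: u_def v_def algebra_simps)
    also have "\<dots> = p" using deti ss by (simp add: algebra_simps)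
    finally show ?thesis .
  qed
  have qu: "u * b + v * d = q"
  proof -
    have "u * b + v * d = s * q * (c * b - a * d)" by (simp add: u_def v_def algebra_simps)
    also have "\<dots> = q" using deti ss by (simp add: algebra_simps)
    finally show ?thesis .
  qed
  have Ea: "E (Suc n) = of_int b * \<alpha> - of_int a" by (simp add: E_def PP_def QQ_def a_def b_def)
  have Ec: "E (Suc (Suc n)) = of_int d * \<alpha> - of_int c" by (simp add: E_def PP_def QQ_def c_def d_def)
  have key: "of_int q * \<alpha> - of_int p = of_int u * E (Suc n) + of_int v * E (Suc (Suc n))"
  proof -
    have "of_int q * \<alpha> - of_int p = (of_int (u * b + v * d)) * \<alpha> - of_int (u * a + v * c)"
      using pu qu by simp
    then show ?thesis unfolding Ea Ec by (simp add: algebra_simps)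
  qed
  have b1: "b \<ge> 1" using QQ_ge1[of "Suc n"] by (simp add: QQ_def b_def)
  have Qd: "QQ \<alpha> (Suc (Suc n)) = of_int d" by (simp only: QQ_def d_def)
  have d1: "d \<ge> 1" using QQ_ge1[of "Suc (Suc n)"] unfolding Qd by simp
  have qd: "q < d" using qlt unfolding Qd by simp
  have sgn: "E (Suc n) * E (Suc (Suc n)) < 0"
  proof -
    have A: "0 < (-1)^n * E (Suc n)" using E_sign[of n] by simp
    have B: "(-1)^n * E (Suc (Suc n)) < 0" using E_sign[of "Suc n"] by simp
    have s1: "(-1::real)^n * (-1)^n = 1" by (simp flip: power_mult_distrib)
    have "((-1)^n * E (Suc n)) * ((-1)^n * E (Suc (Suc n))) < 0" by (rule mult_pos_neg[OF A B])
    also have "((-1)^n * E (Suc n)) * ((-1)^n * E (Suc (Suc n))) = ((-1::real)^n * (-1)^n) * (E (Suc n) * E (Suc (Suc n)))"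
      by (simp only: ac_simps)
    finally show ?thesis unfolding s1 by simp
  qed
  show ?thesis
  proof (cases "v = 0")
    case True
    then have "q = u * b" using qu by simp
    then have "u \<ge> 1" using q0 b1
      by (metis int_one_le_iff_zero_less mult_le_0_iff not_less order_less_le)
    then have "\<bar>E (Suc n)\<bar> \<le> \<bar>of_int u\<bar> * \<bar>E (Suc n)\<bar>"
      by (simp add: mult_le_cancel_right1)
    then show ?thesis using key True by (simp add: abs_mult)
  next
    case vn: False
    have "u \<noteq> 0"
    proof
      assume "u = 0"
      then have "q = v * d" using qu by simp
      then have "v \<ge> 1" using q0 d1
        by (metis int_one_le_iff_zero_less mult_le_0_iff not_less order_less_le)
      then have "q \<ge> d" using \<open>q = v * d\<close> d1 by simp
      with qd show False by simp
    qed
    have "u * v < 0"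
    proof (rule ccontr)
      assume "\<not> u * v < 0"
      then have "u * v > 0" using vn \<open>u \<noteq> 0\<close> by (simp add: linorder_not_less le_less)
      then consider "u > 0 \<and> v > 0" | "u < 0 \<and> v < 0" by (metis zero_less_mult_iff)
      then show False
      proof cases
        case 1 then have "u * b \<ge> 0" "v * d \<ge> d" using b1 d1 by auto
        then show ?thesis using qu qd by linarith
      next
        case 2 then have "u * b < 0" "v * d < 0" using b1 d1 by (auto simp: mult_neg_pos)
        then show ?thesis using qu q0 by linarith
      qed
    qed
    define x where "x = of_int u * E (Suc n)"
    define y where "y = of_int v * E (Suc (Suc n))"
    have "x * y = of_int (u * v) * (E (Suc n) * E (Suc (Suc n)))" by (simp add: x_def y_def algebra_simps)
    also have "\<dots> > 0"
    proof -
      have "real_of_int (u * v) < 0" using \<open>u * v < 0\<close> by linarith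
      then show ?thesis using sgn by (rule mult_neg_neg)
    qed
    finally have xy: "x * y > 0" .
    then have "\<bar>x + y\<bar> = \<bar>x\<bar> + \<bar>y\<bar>" by (smt (verit) zero_less_mult_iff)
    then have "\<bar>x + y\<bar> \<ge> \<bar>x\<bar>" by simp
    moreover have "\<bar>x\<bar> \<ge> \<bar>E (Suc n)\<bar>"
    proof -
      have "\<bar>u\<bar> \<ge> 1" using \<open>u \<noteq> 0\<close> by linarith
      then have "\<bar>real_of_int u\<bar> \<ge> 1" by (metis of_int_1_le_iff of_int_abs)
      then have "1 * \<bar>E (Suc n)\<bar> \<le> \<bar>real_of_int u\<bar> * \<bar>E (Suc n)\<bar>" by (intro mult_right_mono) auto
      then show ?thesis unfolding x_def abs_mult by simp
    qed
    ultimately show ?thesis using key x_def y_def by simp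
  qed
qed

lemma legendre:
  fixes p q :: int
  assumes q1: "q \<ge> 1" and pos: "0 < \<alpha> - of_int p / of_int q"
    and small: "\<alpha> - of_int p / of_int q < 1 / (2 * of_int q ^ 2)"
  shows "\<exists>n. even n \<and> QQ \<alpha> (Suc n) \<le> of_int q \<and> of_int p * QQ \<alpha> (Suc n) = PP \<alpha> (Suc n) * of_int q"
proof -
  have ex: "\<exists>j. real_of_int q < QQ \<alpha> j"
    using QQ_grow[of "nat (2*q+1)"] q1 by (intro exI[of _ "nat (2*q+1)"]) simp
  define j where "j = (LEAST j. real_of_int q < QQ \<alpha> j)"
  have jq: "real_of_int q < QQ \<alpha> j" unfolding j_def using ex by (metis LeastI)
  have j0: "j \<noteq> 0"
  proof assume "j = 0" then show False using jq q1 by (simp add: QQ_simps) qed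
  have j1: "j \<noteq> 1"
  proof assume "j = 1" then show False using jq q1 by (simp add: QQ_simps) qed
  obtain n where jn: "j = Suc (Suc n)" using j0 j1 by (metis not0_implies_Suc One_nat_def)
  have qn: "QQ \<alpha> (Suc n) \<le> of_int q"
    using not_less_Least[of "Suc n" "\<lambda>j. real_of_int q < QQ \<alpha> j"] jn j_def by fastforce
  define qn' where "qn' = QQ \<alpha> (Suc n)"
  define pn' where "pn' = PP \<alpha> (Suc n)"
  have qn1: "qn' \<ge> 1" using QQ_ge1 qn'_def by simp
  have qr: "real_of_int q \<ge> 1" using q1 by simp
  have ba: "\<bar>E (Suc n)\<bar> \<le> \<bar>of_int q * \<alpha> - of_int p\<bar>"
    using best_approx[of q n p] q1 jq jn by simp
  have "of_int q * \<alpha> - of_int p = of_int q * (\<alpha> - of_int p / of_int q)" using qr by (simp add: field_simps)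
  moreover have "of_int q * (\<alpha> - of_int p / of_int q) < of_int q * (1 / (2 * of_int q ^ 2))"
    by (rule mult_strict_left_mono) (use small qr in auto)
  ultimately have "\<bar>of_int q * \<alpha> - of_int p\<bar> < of_int q * (1 / (2 * of_int q ^ 2))"
    using pos qr by simp
  also have "\<dots> = 1 / (2 * of_int q)" using qr by (simp add: power2_eq_square)
  finally have Eb: "\<bar>E (Suc n)\<bar> < 1 / (2 * of_int q)" using ba by linarith
  have eq: "of_int p * qn' = pn' * of_int q"
  proof (rule ccontr)
    assume ne: "of_int p * qn' \<noteq> pn' * of_int q"
    have "qn' = of_int (snd (cf_pq \<alpha> (Suc n)))" "pn' = of_int (fst (cf_pq \<alpha> (Suc n)))"
      by (simp_all add: qn'_def pn'_def QQ_def PP_def)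
    then obtain z :: int where z: "of_int p * qn' - pn' * of_int q = of_int z" by (metis of_int_diff of_int_mult)
    then have "z \<noteq> 0" using ne by auto
    then have z1: "\<bar>of_int p * qn' - pn' * of_int q\<bar> \<ge> 1" unfolding z by linarith
    have "of_int p / of_int q - pn' / qn' = (of_int p * qn' - pn' * of_int q) / (of_int q * qn')"
      using qr qn1 by (simp add: field_simps)
    then have d1: "\<bar>of_int p / of_int q - pn' / qn'\<bar> \<ge> 1 / (of_int q * qn')"
      using z1 qr qn1 by (simp add: abs_div divide_right_mono)
    have "\<alpha> - pn' / qn' = E (Suc n) / qn'" using qn1 by (simp add: E_def qn'_def pn'_def field_simps)
    moreover have "\<bar>E (Suc n)\<bar> / qn' < (1 / (2 * of_int q)) / qn'"
      by (rule divide_strict_right_mono) (use Eb qn1 in auto)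
    ultimately have d2: "\<bar>\<alpha> - pn' / qn'\<bar> < 1 / (2 * of_int q * qn')"
      using qn1 by (simp add: abs_div)
    have "1 / (2 * of_int q ^ 2) \<le> 1 / (2 * of_int q * qn')"
      using qn qn1 qr unfolding qn'_def[symmetric] by (simp add: power2_eq_square frac_le)
    then have d3: "\<bar>\<alpha> - of_int p / of_int q\<bar> < 1 / (2 * of_int q * qn')" using pos small by simp
    have "1 / (of_int q * qn') = 1 / (2 * of_int q * qn') + 1 / (2 * of_int q * qn')" by simp
    then show False using d1 d2 d3 by (smt (verit))
  qed
  have "even n"
  proof (rule ccontr)
    assume "odd n"
    then have "E (Suc n) < 0" using E_sign[of n] by (simp add: zero_less_mult_iff)
    moreover have "E (Suc n) = qn' * (\<alpha> - of_int p / of_int q)"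
    proof -
      have "pn' = of_int p * qn' / of_int q" using eq qr by (simp add: field_simps)
      then show ?thesis using qr by (simp add: E_def qn'_def[symmetric] pn'_def[symmetric] field_simps)
    qed
    ultimately show False using pos qn1 by (simp add: zero_less_mult_iff mult_less_0_iff)
  qed
  then show ?thesis using eq qn qn'_def pn'_def by blast
qed

end


lemma tele_bound:
  fixes N :: nat and C :: real
  assumes N1: "N \<ge> 1" and C0: "C \<ge> 0"
  defines "h \<equiv> \<lambda>n::nat. inverse (max (real n) (real N))"
  shows "(\<lambda>n. C * (h n - h (Suc n))) sums (C / real N)"
    and "\<And>n. N \<le> n \<Longrightarrow> C / (real (Suc n))^2 \<le> C * (h n - h (Suc n))"
    and "\<And>n. h n - h (Suc n) \<ge> 0"
proof -
  have lim: "h \<longlonglongrightarrow> 0" unfolding h_def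
  proof (rule tendsto_inverse_0_at_top)
    show "filterlim (\<lambda>n. max (real n) (real N)) at_top sequentially"
      by (rule filterlim_at_top_mono[OF filterlim_real_sequentially]) auto
  qed
  have "(\<lambda>n. h n - h (Suc n)) sums (h 0 - 0)" by (rule telescope_sums'[OF lim])
  then have "(\<lambda>n. C * (h n - h (Suc n))) sums (C * (h 0 - 0))" by (rule sums_mult)
  moreover have "C * (h 0 - 0) = C / real N" using N1 by (simp add: h_def divide_inverse)
  ultimately show "(\<lambda>n. C * (h n - h (Suc n))) sums (C / real N)" by simp
  show "h n - h (Suc n) \<ge> 0" for n
    unfolding h_def using N1 by (auto simp: max_def le_imp_inverse_le)
  show "C / (real (Suc n))^2 \<le> C * (h n - h (Suc n))" if "N \<le> n" for n
  proof -
    have n1: "real n \<ge> 1" using that N1 by simp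
    have "h n - h (Suc n) = 1 / real n - 1 / real (Suc n)" using that by (simp add: h_def divide_inverse)
    also have "\<dots> = 1 / (real n * real (Suc n))" using n1 by (simp add: field_simps)
    also have "\<dots> \<ge> 1 / (real (Suc n))^2" using n1 by (simp add: power2_eq_square frac_le)
    finally show ?thesis using C0 by (simp add: divide_inverse mult_left_mono)
  qed
qed


lemma measure_avoid:
  fixes a b \<gamma> \<tau> :: real and N :: nat
  assumes ab: "a < b" and g0: "\<gamma> > 0" and g12: "\<gamma> \<le> 1/2" and t3: "\<tau> > 3" and N1: "N \<ge> 1"
    and small: "2 * \<gamma> * (b - a) / real N powr (\<tau> - 1) + 6 * \<gamma> / real N powr \<tau> < b - a"
  shows "\<exists>y\<in>{a..b}. \<forall>q p :: int. real_of_int q > real N \<longrightarrow>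
            \<bar>y - of_int p / of_int q\<bar> \<ge> \<gamma> / of_int q powr (\<tau> + 1)"
proof (rule ccontr)
  assume "\<not> ?thesis"
  then have cov0: "\<forall>y\<in>{a..b}. \<exists>q p :: int. real_of_int q > real N \<and>
            \<bar>y - of_int p / of_int q\<bar> < \<gamma> / of_int q powr (\<tau> + 1)" by (auto simp: not_le)
  define \<rho> where "\<rho> = (\<lambda>x::real. \<gamma> / x powr (\<tau> + 1))"
  define lo where "lo = (\<lambda>n::nat. \<lceil>real (Suc n) * a\<rceil> - 1)"
  define hi where "hi = (\<lambda>n::nat. \<lfloor>real (Suc n) * b\<rfloor> + 1)"
  define W where "W = (\<lambda>n::nat. if N \<le> n then (\<Union>p\<in>{lo n..hi n}. {of_int p / real (Suc n) - \<rho> (real (Suc n)) <..< of_int p / real (Suc n) + \<rho> (real (Suc n))}) else {})"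
  define f where "f = (\<lambda>n::nat. if N \<le> n then real (card {lo n..hi n}) * (2 * \<rho> (real (Suc n))) else 0)"
  define C where "C = 2 * \<gamma> * (b - a) / real N powr (\<tau> - 2) + 6 * \<gamma> / real N powr (\<tau> - 1)"
  define h where "h = (\<lambda>n::nat. inverse (max (real n) (real N)))"
  have C0: "C \<ge> 0" using g0 ab by (simp add: C_def)
  have tb1: "(\<lambda>n. C * (h n - h (Suc n))) sums (C / real N)"
    using tele_bound(1)[OF N1 C0] by (simp add: h_def)
  have tb2: "C / (real (Suc n))^2 \<le> C * (h n - h (Suc n))" if "N \<le> n" for n
    using tele_bound(2)[OF N1 C0 that] by (simp add: h_def)
  have tb3: "h n - h (Suc n) \<ge> 0" for n
    using tele_bound(3)[OF N1 C0, of n] by (simp add: h_def)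
  have rho_small: "\<rho> x < 1 / x" if "x \<ge> 1" for x
  proof -
    have "x powr (\<tau> + 1) \<ge> x powr 1" using that t3 by (intro powr_mono) auto
    then have "\<gamma> / x powr (\<tau> + 1) \<le> \<gamma> / x" using that g0 by (simp add: frac_le)
    also have "\<dots> < 1 / x" using that g12 by (simp add: divide_strict_right_mono)
    finally show ?thesis by (simp add: \<rho>_def)
  qed
  have cover: "{a..b} \<subseteq> (\<Union>n. W n)"
  proof
    fix y assume y: "y \<in> {a..b}"
    then obtain q p :: int where qN: "real_of_int q > real N"
      and yp: "\<bar>y - of_int p / of_int q\<bar> < \<gamma> / of_int q powr (\<tau> + 1)" using cov0 by blast
    define n where "n = nat q - 1"
    have q1: "q \<ge> 1" using qN N1 by linarith
    have qn: "real_of_int q = real (Suc n)" using q1 by (simp add: n_def)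
    have Nn: "N \<le> n" using qN q1 unfolding n_def by linarith
    have qr: "real_of_int q \<ge> 1" using q1 by simp
    have yp': "\<bar>y - of_int p / of_int q\<bar> < 1 / of_int q" using yp rho_small[OF qr] by (simp add: \<rho>_def)
    have "\<bar>of_int q * y - of_int p\<bar> = of_int q * \<bar>y - of_int p / of_int q\<bar>"
    proof -
      have "of_int q * y - of_int p = of_int q * (y - of_int p / of_int q)" using qr by (simp add: field_simps)
      then show ?thesis using qr by (simp add: abs_mult)
    qed
    also have "\<dots> < of_int q * (1 / of_int q)" using yp' qr by (intro mult_strict_left_mono) auto
    also have "\<dots> = 1" using qr by simp
    finally have a1: "\<bar>of_int q * y - of_int p\<bar> < 1" .
    have "of_int q * a \<le> of_int q * y" "of_int q * y \<le> of_int q * b" using y qr by (auto intro: mult_left_mono)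
    then have "real_of_int p > of_int q * a - 1" "real_of_int p < of_int q * b + 1" using a1 by linarith+
    then have "p \<ge> lo n" "p \<le> hi n" unfolding lo_def hi_def qn[symmetric]
    proof -
      assume h1: "real_of_int q * a - 1 < real_of_int p" and h2: "real_of_int p < real_of_int q * b + 1"
      have "\<lceil>real_of_int q * a\<rceil> \<le> p + 1" using h1 by (simp add: ceiling_le_iff)
      then show "\<lceil>real_of_int q * a\<rceil> - 1 \<le> p" by simp
      have "p - 1 \<le> \<lfloor>real_of_int q * b\<rfloor>" using h2 by (simp add: le_floor_iff)
      then show "p \<le> \<lfloor>real_of_int q * b\<rfloor> + 1" by simp
    qed
    then have "y \<in> {of_int p / real (Suc n) - \<rho> (real (Suc n)) <..< of_int p / real (Suc n) + \<rho> (real (Suc n))}"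
      using yp unfolding qn \<rho>_def by (auto simp: abs_less_iff)
    then show "y \<in> (\<Union>n. W n)" using \<open>p \<ge> lo n\<close> \<open>p \<le> hi n\<close> Nn unfolding W_def by (intro UN_I[of n]) auto
  qed
  have Wle: "emeasure lborel (W n) \<le> ennreal (f n)" for n
  proof (cases "N \<le> n")
    case True
    have "emeasure lborel (W n) \<le> (\<Sum>p\<in>{lo n..hi n}. emeasure lborel {of_int p / real (Suc n) - \<rho> (real (Suc n)) <..< of_int p / real (Suc n) + \<rho> (real (Suc n))})"
      unfolding W_def using True by (simp only: if_True) (rule emeasure_subadditive_finite, auto)
    also have "\<dots> = (\<Sum>p\<in>{lo n..hi n}. ennreal (2 * \<rho> (real (Suc n))))"
    proof (rule sum.cong)
      fix p assume "p \<in> {lo n..hi n}"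
      have "\<rho> (real (Suc n)) \<ge> 0" using g0 by (simp add: \<rho>_def)
      then show "emeasure lborel {of_int p / real (Suc n) - \<rho> (real (Suc n)) <..< of_int p / real (Suc n) + \<rho> (real (Suc n))} = ennreal (2 * \<rho> (real (Suc n)))"
        by simp
    qed simp
    also have "\<dots> = ennreal (\<Sum>p\<in>{lo n..hi n}. 2 * \<rho> (real (Suc n)))"
      by (rule sum_ennreal) (use g0 in \<open>simp add: \<rho>_def\<close>)
    also have "\<dots> = ennreal (f n)" using True by (simp only: f_def sum_constant if_True)
    finally show ?thesis .
  qed (simp add: W_def f_def)
  have f0: "f n \<ge> 0" for n using g0 by (simp add: f_def \<rho>_def)
  have fg: "f n \<le> C * (h n - h (Suc n))" for n
  proof (cases "N \<le> n")
    case False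
    have "0 \<le> C * (h n - h (Suc n))" by (rule mult_nonneg_nonneg[OF C0 tb3])
    then show ?thesis using False by (simp add: f_def)
  next
    case True
    define q where "q = real (Suc n)"
    have qN: "q \<ge> real N" using True by (simp add: q_def)
    have q1: "q \<ge> 1" by (simp add: q_def)
    have Nr: "real N \<ge> 1" using N1 by simp
    have card: "real (card {lo n..hi n}) \<le> q * (b - a) + 3"
    proof -
      have "real (card {lo n..hi n}) = max 0 (real_of_int (hi n - lo n + 1))" by simp
      moreover have "real_of_int (hi n - lo n + 1) \<le> q * b - q * a + 3"
        unfolding hi_def lo_def q_def[symmetric] using of_int_floor_le[of "q * b"] le_of_int_ceiling[of "q * a"]
        by (simp only: of_int_add of_int_diff of_int_1)
      moreover have "q * (b - a) \<ge> 0" using ab q1 by simp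
      ultimately show ?thesis by (simp add: algebra_simps)
    qed
    have q2: "q powr 2 = q^2" using q1 by (rule_tac powr_numeral) simp
    have p1: "q powr \<tau> = q^2 * q powr (\<tau> - 2)"
      using powr_add[of q 2 "\<tau> - 2"] unfolding q2 by simp
    have p2: "q powr (\<tau> + 1) = q^2 * q powr (\<tau> - 1)"
      using powr_add[of q 2 "\<tau> - 1"] unfolding q2 by (simp add: add.commute)
    have m1: "q powr (\<tau> - 2) \<ge> real N powr (\<tau> - 2)" using qN Nr t3 by (intro powr_mono2) auto
    have m2: "q powr (\<tau> - 1) \<ge> real N powr (\<tau> - 1)" using qN Nr t3 by (intro powr_mono2) auto
    have pN1: "real N powr (\<tau> - 2) > 0" "real N powr (\<tau> - 1) > 0" using Nr by auto
    have qp1: "q powr (\<tau> + 1) > 0" "q powr \<tau> > 0" using q1 by auto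
    have "f n = real (card {lo n..hi n}) * (2 * \<gamma> / q powr (\<tau> + 1))" using True by (simp add: f_def \<rho>_def q_def)
    also have "\<dots> \<le> (q * (b - a) + 3) * (2 * \<gamma> / q powr (\<tau> + 1))"
      using card g0 qp1 by (intro mult_right_mono) auto
    also have "\<dots> = 2 * \<gamma> * (b - a) * (q / q powr (\<tau> + 1)) + 6 * \<gamma> / q powr (\<tau> + 1)"
      using qp1 by (simp add: field_simps)
    also have "q / q powr (\<tau> + 1) = 1 / q powr \<tau>"
      using q1 by (simp add: powr_add)
    finally have f1: "f n \<le> 2 * \<gamma> * (b - a) / q powr \<tau> + 6 * \<gamma> / q powr (\<tau> + 1)" by simp
    have l1: "q^2 * real N powr (\<tau> - 2) \<le> q powr \<tau>"
      unfolding p1 by (rule mult_left_mono[OF m1]) simp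
    have l2: "q^2 * real N powr (\<tau> - 1) \<le> q powr (\<tau> + 1)"
      unfolding p2 by (rule mult_left_mono[OF m2]) simp
    have pq: "q^2 * real N powr (\<tau> - 2) > 0" "q^2 * real N powr (\<tau> - 1) > 0" using q1 pN1 by auto
    have e1: "2 * \<gamma> * (b - a) / q powr \<tau> \<le> 2 * \<gamma> * (b - a) / (q^2 * real N powr (\<tau> - 2))"
      by (rule divide_left_mono[OF l1]) (use g0 ab pq qp1 in auto)
    have e2: "6 * \<gamma> / q powr (\<tau> + 1) \<le> 6 * \<gamma> / (q^2 * real N powr (\<tau> - 1))"
      by (rule divide_left_mono[OF l2]) (use g0 ab pq qp1 in auto)
    have e3: "2 * \<gamma> * (b - a) / (q^2 * real N powr (\<tau> - 2)) + 6 * \<gamma> / (q^2 * real N powr (\<tau> - 1)) = C / q^2"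
      unfolding C_def by (simp add: add_divide_distrib divide_divide_eq_left mult.commute)
    have e4: "C / q^2 \<le> C * (h n - h (Suc n))" using tb2[OF True] by (simp add: q_def)
    show ?thesis using f1 e1 e2 e3 e4 by linarith
  qed
  have sg: "summable (\<lambda>n. C * (h n - h (Suc n)))" using tb1 by (simp add: sums_iff)
  have sf: "summable f"
    by (rule summable_comparison_test'[OF sg, of 0]) (use f0 fg in auto)
  have "suminf f \<le> C / real N"
    using suminf_le[OF fg sf sg] tb1 by (simp add: sums_iff)
  also have "C / real N = 2 * \<gamma> * (b - a) / real N powr (\<tau> - 1) + 6 * \<gamma> / real N powr \<tau>"
  proof -
    have "real N powr (\<tau> - 2) * real N = real N powr (\<tau> - 1)" "real N powr (\<tau> - 1) * real N = real N powr \<tau>"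
    proof -
      have Np: "real N > 0" using N1 by simp
      have "real N powr (\<tau> - 2) * real N powr 1 = real N powr (\<tau> - 2 + 1)" by (simp only: powr_add)
      moreover have "real N powr (\<tau> - 1) * real N powr 1 = real N powr (\<tau> - 1 + 1)" by (simp only: powr_add)
      ultimately show "real N powr (\<tau> - 2) * real N = real N powr (\<tau> - 1)" "real N powr (\<tau> - 1) * real N = real N powr \<tau>"
        using Np by (simp_all add: algebra_simps)
    qed
    then show ?thesis unfolding C_def using N1 by (simp add: add_divide_distrib divide_divide_eq_left)
  qed
  finally have sfb: "suminf f < b - a" using small by simp
  have "ennreal (b - a) = emeasure lborel {a..b}" using ab by simp
  also have "\<dots> \<le> emeasure lborel (\<Union>n. W n)" by (rule emeasure_mono[OF cover]) (auto simp: W_def)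
  also have "\<dots> \<le> (\<Sum>n. emeasure lborel (W n))" by (rule emeasure_subadditive_countably) (auto simp: W_def)
  also have "\<dots> \<le> (\<Sum>n. ennreal (f n))" by (rule suminf_le[OF Wle summableI summableI])
  also have "\<dots> = ennreal (suminf f)" using f0 sf by (simp add: suminf_ennreal2)
  finally have "b - a \<le> suminf f" using f0 sf by (simp add: ennreal_le_iff suminf_nonneg)
  with sfb show False by simp
qed


lemma frac_gap:
  fixes a b c d :: int
  assumes b: "b > 0" and d: "d > 0" and lt: "of_int a / of_int b < (of_int c / of_int d :: real)"
  shows "of_int c / of_int d - of_int a / of_int b \<ge> 1 / (of_int b * of_int d :: real)"
proof -
  have br: "real_of_int b > 0" and dr: "real_of_int d > 0" using b d by auto
  have eq: "of_int c / of_int d - of_int a / of_int b = real_of_int (c * b - a * d) / (of_int b * of_int d)"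
    using br dr by (simp add: field_simps)
  have "real_of_int (c * b - a * d) > 0" using lt eq br dr
    by (smt (verit) divide_nonpos_pos mult_pos_pos)
  then have "c * b - a * d \<ge> 1" by linarith
  then have "real_of_int (c * b - a * d) \<ge> 1" by linarith
  then show ?thesis unfolding eq using br dr by (simp add: divide_right_mono)
qed

lemma dist_int_le: "p \<in> \<int> \<Longrightarrow> dist_int x \<le> \<bar>x - p\<bar>"
  unfolding dist_int_def by (rule cINF_lower) (auto simp: bdd_below_def intro: exI[of _ 0])

lemma dist_int_ge: "(\<And>p. p \<in> \<int> \<Longrightarrow> c \<le> \<bar>x - p\<bar>) \<Longrightarrow> c \<le> dist_int x"
  unfolding dist_int_def by (rule cINF_greatest) (auto intro: Ints_0)

lemma powr_plus1: "(q::real) > 0 \<Longrightarrow> q * (\<gamma> / q powr (\<tau> + 1)) = \<gamma> / q powr \<tau>"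
  by (simp add: powr_add)

lemma Dioph_D:
  assumes D: "\<alpha> \<in> Dioph \<gamma> \<tau>" and g0: "\<gamma> > 0"
  shows "0 < \<alpha>" "\<alpha> < 1"
    and Dq: "\<And>q p :: int. q \<ge> 1 \<Longrightarrow> \<bar>of_int q * \<alpha> - of_int p\<bar> \<ge> \<gamma> / of_int q powr \<tau>"
    and "\<gamma> \<le> 1/2" and "\<alpha> \<notin> \<rat>"
proof -
  show "0 < \<alpha>" "\<alpha> < 1" using D by (auto simp: Dioph_def)
  show Dq: "\<bar>of_int q * \<alpha> - of_int p\<bar> \<ge> \<gamma> / of_int q powr \<tau>" if "q \<ge> 1" for q p :: int
  proof -
    have "nat q \<ge> 1" using that by simp
    then have "dist_int (real (nat q) * \<alpha>) \<ge> \<gamma> / real (nat q) powr \<tau>" using D by (auto simp: Dioph_def)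
    moreover have "real (nat q) = of_int q" using that by simp
    ultimately have "dist_int (of_int q * \<alpha>) \<ge> \<gamma> / of_int q powr \<tau>" by simp
    moreover have "dist_int (of_int q * \<alpha>) \<le> \<bar>of_int q * \<alpha> - of_int p\<bar>" by (rule dist_int_le) simp
    ultimately show ?thesis by linarith
  qed
  have "\<gamma> \<le> \<bar>of_int 1 * \<alpha> - of_int (round \<alpha>)\<bar>" using Dq[of 1 "round \<alpha>"] by simp
  also have "\<dots> \<le> 1/2" using of_int_round_abs_le[of \<alpha>] by (simp add: abs_minus_commute)
  finally show "\<gamma> \<le> 1/2" .
  show "\<alpha> \<notin> \<rat>"
  proof
    assume "\<alpha> \<in> \<rat>"
    then obtain a b :: int where b: "b > 0" and ab: "\<alpha> = of_int a / of_int b" by (metis Rats_cases')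
    have "\<bar>of_int b * \<alpha> - of_int a\<bar> = 0" using b ab by simp
    moreover have "\<gamma> / of_int b powr \<tau> > 0" using g0 b by simp
    ultimately show False using Dq[of b a] b by simp
  qed
qed

lemma Dioph_I:
  assumes "0 < y" "y < 1" and H: "\<And>q p :: int. q \<ge> 1 \<Longrightarrow> \<bar>y - of_int p / of_int q\<bar> \<ge> \<gamma> / of_int q powr (\<tau> + 1)"
  shows "y \<in> Dioph \<gamma> \<tau>"
  unfolding Dioph_def
proof (intro CollectI conjI allI impI)
  fix q :: nat assume q1: "q \<ge> 1"
  show "dist_int (real q * y) \<ge> \<gamma> / real q powr \<tau>"
  proof (rule dist_int_ge)
    fix p :: real assume "p \<in> \<int>"
    then obtain z where z: "p = of_int z" by (metis Ints_cases)
    have qr: "real q > 0" using q1 by simp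
    have "\<gamma> / real q powr \<tau> = real q * (\<gamma> / real q powr (\<tau> + 1))" using powr_plus1[OF qr] by simp
    also have "\<dots> \<le> real q * \<bar>y - of_int z / of_int (int q)\<bar>"
      using H[of "int q" z] q1 qr by (intro mult_left_mono) auto
    also have "\<dots> = \<bar>real q * y - p\<bar>"
    proof -
      have "real q * y - p = real q * (y - of_int z / of_int (int q))" using qr z by (simp add: field_simps)
      then show ?thesis using qr by (simp add: abs_mult)
    qed
    finally show "\<gamma> / real q powr \<tau> \<le> \<bar>real q * y - p\<bar>" .
  qed
qed (use assms in auto)


theorem lemma9:
  fixes \<tau> \<gamma> \<alpha> :: real
  assumes "\<tau> > (3 + sqrt 17) / 2"
    and "\<gamma> > 0"
    and "\<alpha> \<in> Dioph \<gamma> \<tau>"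
    and "\<forall>n. even n \<longrightarrow>
           \<alpha> - of_int (cf_p \<alpha> n) / of_int (cf_q \<alpha> n) > \<gamma> / of_int (cf_q \<alpha> n) powr (\<tau> + 1)"
    and "infinite {m. even m \<and> (\<forall>n. even n \<and> n < m \<longrightarrow>
           of_int (cf_p \<alpha> n) / of_int (cf_q \<alpha> n) + \<gamma> / of_int (cf_q \<alpha> n) powr (\<tau> + 1)
           < of_int (cf_p \<alpha> m) / of_int (cf_q \<alpha> m) - \<gamma> / of_int (cf_q \<alpha> m) powr (\<tau> + 1)
             - 2 * \<gamma> / of_int (cf_q \<alpha> m) powr (\<tau> - 1))}"
  shows "\<alpha> islimpt Dioph \<gamma> \<tau>"
proof -
  note D = assms(3)
  have g0: "\<gamma> > 0" by (rule assms(2))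
  have a0: "0 < \<alpha>" and a1: "\<alpha> < 1" and g12: "\<gamma> \<le> 1/2" and irr: "\<alpha> \<notin> \<rat>"
    using Dioph_D[OF D g0] by auto
  have Dq: "\<And>q p :: int. q \<ge> 1 \<Longrightarrow> \<bar>real_of_int q * \<alpha> - of_int p\<bar> \<ge> \<gamma> / real_of_int q powr \<tau>"
    using Dioph_D(3)[OF D g0] by blast
  have "3 < sqrt 17" by (rule real_less_rsqrt) simp
  then have t3: "\<tau> > 3" using assms(1) by simp
  define S where "S = {m. even m \<and> (\<forall>n. even n \<and> n < m \<longrightarrow>
           PP \<alpha> (Suc n) / QQ \<alpha> (Suc n) + \<gamma> / QQ \<alpha> (Suc n) powr (\<tau> + 1)
           < PP \<alpha> (Suc m) / QQ \<alpha> (Suc m) - \<gamma> / QQ \<alpha> (Suc m) powr (\<tau> + 1)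
             - 2 * \<gamma> / QQ \<alpha> (Suc m) powr (\<tau> - 1))}"
  have infS: "infinite S" using assms(5) unfolding S_def cfp_PP cfq_QQ .
  show ?thesis unfolding islimpt_approachable
  proof (intro allI impI)
    fix \<epsilon> :: real assume e0: "\<epsilon> > 0"
    define M0 where "M0 = max 4 (max (3 powr (1 / (\<tau> - 3))) (2 / \<epsilon>))"
    obtain m where mS: "m \<in> S" and mbig: "m \<ge> nat \<lceil>2 * M0 + 2\<rceil>"
      using infS unfolding infinite_nat_iff_unbounded_le by blast
    have mreal: "real m \<ge> 2 * M0 + 2" using mbig by linarith
    have em: "even m" and hypm: "\<And>n. even n \<Longrightarrow> n < m \<Longrightarrow>
           PP \<alpha> (Suc n) / QQ \<alpha> (Suc n) + \<gamma> / QQ \<alpha> (Suc n) powr (\<tau> + 1)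
           < PP \<alpha> (Suc m) / QQ \<alpha> (Suc m) - \<gamma> / QQ \<alpha> (Suc m) powr (\<tau> + 1)
             - 2 * \<gamma> / QQ \<alpha> (Suc m) powr (\<tau> - 1)" using mS unfolding S_def by auto
    define Q where "Q = QQ \<alpha> (Suc m)"
    define Pm where "Pm = PP \<alpha> (Suc m)"
    define B where "B = Pm / Q"
    define R where "R = B - \<gamma> / Q powr (\<tau> + 1)"
    define \<delta> where "\<delta> = 2 * \<gamma> / Q powr (\<tau> - 1)"
    have M04: "M0 \<ge> 4" and M03: "M0 \<ge> 3 powr (1 / (\<tau> - 3))" and M0e: "M0 \<ge> 2 / \<epsilon>"
      unfolding M0_def by auto
    have "real (Suc m) \<le> 2 * Q" unfolding Q_def by (rule QQ_grow[OF irr a0 a1])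
    then have QM: "Q \<ge> M0" using mreal by simp
    have Q4: "Q \<ge> 4" using QM M04 by simp
    have Q1: "Q \<ge> 1" using Q4 by simp
    have m0: "0 < m" using mreal M04 by simp
    obtain qm :: int where qm: "Q = of_int qm" unfolding Q_def QQ_def by blast
    obtain pm :: int where pm: "Pm = of_int pm" unfolding Pm_def PP_def by blast
    define N where "N = nat qm"
    have QN: "Q = real N" using qm Q1 by (simp add: N_def)
    have N1: "N \<ge> 1" using QN Q1 by simp
    have Qtau: "Q powr (\<tau> - 3) \<ge> 3"
    proof -
      have "(3 powr (1 / (\<tau> - 3))) powr (\<tau> - 3) \<le> Q powr (\<tau> - 3)"
        using M03 QM t3 by (intro powr_mono2) auto
      moreover have "(3 powr (1 / (\<tau> - 3))) powr (\<tau> - 3) = 3" using t3 by (simp add: powr_powr)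
      ultimately show ?thesis by simp
    qed
    have Qpos: "Q > 0" using Q1 by simp
    have Qsq: "Q powr (\<tau> - 1) = Q powr (\<tau> - 3) * Q^2"
    proof -
      have "Q powr (\<tau> - 1) = Q powr ((\<tau> - 3) + 2)" by simp
      also have "\<dots> = Q powr (\<tau> - 3) * Q powr 2" by (rule powr_add)
      also have "Q powr 2 = Q^2" using Qpos by (rule_tac powr_numeral) simp
      finally show ?thesis .
    qed
    have Qm1: "Q powr (\<tau> - 1) \<ge> 3 * Q^2" unfolding Qsq using Qtau by (intro mult_right_mono) auto
    have Qp1: "Q powr (\<tau> + 1) \<ge> Q powr (\<tau> - 1)" using Q1 by (intro powr_mono) auto
    have Qpp: "Q powr (\<tau> - 1) > 0" using Qpos by simp
    have c1: "\<gamma> / Q powr (\<tau> + 1) + \<delta> \<le> 1 / (2 * Q^2)"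
    proof -
      have "\<gamma> / Q powr (\<tau> + 1) \<le> \<gamma> / Q powr (\<tau> - 1)" using Qp1 Qpp g0 by (intro divide_left_mono) auto
      then have "\<gamma> / Q powr (\<tau> + 1) + \<delta> \<le> 3 * \<gamma> / Q powr (\<tau> - 1)" unfolding \<delta>_def by simp
      also have "\<dots> \<le> 3 * \<gamma> / (3 * Q^2)" using Qm1 Qpos g0 by (intro divide_left_mono) auto
      also have "\<dots> = \<gamma> / Q^2" by simp
      also have "\<dots> \<le> (1/2) / Q^2" using g12 Qpos by (intro divide_right_mono) auto
      finally show ?thesis by simp
    qed
    have d0: "\<delta> > 0" using g0 Qpp by (simp add: \<delta>_def)
    have R_d: "R - \<delta> \<ge> B - 1 / (2 * Q^2)" using c1 unfolding R_def by simp
    have hyp0: "\<gamma> < R - \<delta>" using hypm[of 0] em m0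
      by (simp add: PP_simps QQ_simps R_def \<delta>_def B_def Q_def Pm_def)
    have Epos: "E \<alpha> (Suc m) > 0" using E_sign[OF irr a0 a1, of m] em by simp
    have Eabs: "\<bar>E \<alpha> (Suc m)\<bar> < 1 / QQ \<alpha> (Suc (Suc m))" by (rule E_abs[OF irr a0 a1])
    have QQm: "QQ \<alpha> (Suc (Suc m)) \<ge> Q" unfolding Q_def by (rule QQ_mono[OF irr a0 a1]) simp
    have Edef: "E \<alpha> (Suc m) = Q * \<alpha> - Pm" unfolding Q_def Pm_def by (rule E_def[OF irr a0 a1])
    have aB: "\<alpha> - B = E \<alpha> (Suc m) / Q" using Qpos unfolding B_def Edef
      by (simp add: field_simps)
    have aB0: "\<alpha> - B > 0" using aB Epos Qpos by simp
    have EQ: "E \<alpha> (Suc m) < 1 / Q"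
    proof -
      have "1 / QQ \<alpha> (Suc (Suc m)) \<le> 1 / Q" using QQm Qpos by (intro divide_left_mono) auto
      then show ?thesis using Eabs Epos by simp
    qed
    have aB1: "\<alpha> - B < 1 / Q^2"
    proof -
      have "E \<alpha> (Suc m) / Q < (1 / Q) / Q" using EQ Qpos by (intro divide_strict_right_mono) auto
      then show ?thesis unfolding aB by (simp add: power2_eq_square)
    qed
    have small: "\<bar>y - of_int p / real_of_int q\<bar> \<ge> \<gamma> / real_of_int q powr (\<tau> + 1)"
      if yT: "y \<in> {R - \<delta>..R}" and q1: "q \<ge> 1" and qQ: "real_of_int q \<le> Q" for y and p q :: int
    proof (rule ccontr)
      assume "\<not> ?thesis"
      then have close: "\<bar>y - of_int p / real_of_int q\<bar> < \<gamma> / real_of_int q powr (\<tau> + 1)" by simp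
      define r where "r = of_int p / (real_of_int q :: real)"
      define \<rho> where "\<rho> = \<gamma> / real_of_int q powr (\<tau> + 1)"
      have qr: "real_of_int q \<ge> 1" using q1 by simp
      have qpos: "real_of_int q > 0" using qr by simp
      have cl: "\<bar>y - r\<bar> < \<rho>" using close by (simp add: r_def \<rho>_def)
      have qrho: "real_of_int q * \<rho> = \<gamma> / real_of_int q powr \<tau>" unfolding \<rho>_def by (rule powr_plus1[OF qpos])
      have yR: "y \<le> R" "y \<ge> R - \<delta>" using yT by auto
      have RB: "R < B" using g0 Qpos by (simp add: R_def)
      have ya: "y < \<alpha>" using yR RB aB0 by simp
      consider "r > \<alpha>" | "r = \<alpha>" | "B < r \<and> r < \<alpha>" | "r = B" | "r < B" by linarith
      then show False
      proof cases
        case 1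
        have "r - \<alpha> < \<rho>" using cl ya 1 by simp
        then have "real_of_int q * (r - \<alpha>) < real_of_int q * \<rho>" using qpos by simp
        moreover have "\<bar>real_of_int q * \<alpha> - of_int p\<bar> = real_of_int q * (r - \<alpha>)"
          using 1 qpos by (simp add: r_def field_simps)
        ultimately show False using Dq[OF q1, of p] qrho by simp
      next
        case 2
        then have "\<alpha> = of_int p / real_of_int q" by (simp add: r_def)
        then have "\<alpha> \<in> \<rat>" by (simp add: Rats_divide)
        then show False using irr by simp
      next
        case 3
        have "r - B \<ge> 1 / (real_of_int q * of_int qm)"
          using frac_gap[of qm q pm p] 3 qm pm qpos Qpos unfolding r_def B_def by (simp add: mult.commute)
        moreover have "1 / (real_of_int q * of_int qm) \<ge> 1 / Q^2" using qQ qpos qm Qpos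
          by (simp add: power2_eq_square frac_le mult_right_mono)
        ultimately show False using aB1 3 by simp
      next
        case 4
        show False
        proof (cases "real_of_int q < Q")
          case True
          have "real_of_int q < QQ \<alpha> (Suc (Suc m))" using True QQm by simp
          then have ba: "\<bar>E \<alpha> (Suc m)\<bar> \<le> \<bar>real_of_int q * \<alpha> - of_int p\<bar>"
            by (rule best_approx[OF irr a0 a1 _, of q m p, OF q1[unfolded int_one_le_iff_zero_less]])
          have "real_of_int q * \<alpha> - of_int p = real_of_int q * (\<alpha> - B)" using 4 qpos by (simp add: r_def field_simps)
          also have "\<dots> = (real_of_int q / Q) * E \<alpha> (Suc m)" using aB by simp
          finally have "\<bar>real_of_int q * \<alpha> - of_int p\<bar> = (real_of_int q / Q) * E \<alpha> (Suc m)" using qpos Qpos Epos by simp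
          moreover have "(real_of_int q / Q) * E \<alpha> (Suc m) < 1 * E \<alpha> (Suc m)"
            using True Qpos Epos qpos by (intro mult_strict_right_mono) auto
          ultimately show False using ba Epos by simp
        next
          case False
          then have "real_of_int q = Q" using qQ by simp
          then have "\<rho> = \<gamma> / Q powr (\<tau> + 1)" by (simp add: \<rho>_def)
          then have "y \<le> r - \<rho>" using yR 4 by (simp add: R_def)
          then show False using cl by simp
        qed
      next
        case 5
        have gap: "B - r \<ge> 1 / (real_of_int q * of_int qm)"
          using frac_gap[of q qm p pm] 5 qm pm qpos Qpos unfolding r_def B_def by (simp add: mult.commute)
        have h2: "1 / (2 * Q^2) \<le> 1 / (2 * (real_of_int q * of_int qm))" using qQ qpos qm Qpos
          by (simp add: power2_eq_square frac_le mult_right_mono)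
        have "y < r + \<rho>" using cl by simp
        then have "\<rho> > 1 / (2 * (real_of_int q * of_int qm))" using yR R_d gap h2 by simp
        then have "\<rho> * (2 * (real_of_int q * Q)) > 1" using qpos Qpos qm by (simp add: field_simps)
        also have "\<rho> * (2 * (real_of_int q * Q)) = 2 * Q * (real_of_int q * \<rho>)" by (simp add: algebra_simps)
        also have "\<dots> = 2 * \<gamma> * Q / real_of_int q powr \<tau>" unfolding qrho by simp
        finally have "real_of_int q powr \<tau> < 2 * \<gamma> * Q" using qpos
          by (simp add: field_simps)
        moreover have "2 * \<gamma> * Q \<le> 1 * Q" using g12 Qpos by (intro mult_right_mono) auto
        ultimately have qtQ: "real_of_int q powr \<tau> < Q" by simp
        have q3: "real_of_int q ^ 3 \<le> real_of_int q powr \<tau>"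
        proof -
          have "real_of_int q powr 3 \<le> real_of_int q powr \<tau>" using qr t3 by (intro powr_mono) auto
          moreover have "real_of_int q powr 3 = real_of_int q ^ 3" using qpos by (rule_tac powr_numeral) simp
          ultimately show ?thesis by simp
        qed
        have qltQ: "real_of_int q < Q"
        proof -
          have "real_of_int q * 1 \<le> real_of_int q * (real_of_int q ^ 2)"
            by (rule mult_left_mono) (use qr in \<open>auto simp: one_le_power\<close>)
          moreover have "real_of_int q * (real_of_int q ^ 2) = real_of_int q ^ 3" by (simp add: power3_eq_cube power2_eq_square)
          ultimately show ?thesis using q3 qtQ by linarith
        qed
        show False
        proof (cases "q = 1")
          case True
          then have "r = of_int p" by (simp add: r_def)
          then have "of_int p < (1::real)" using 5 aB0 a1 by simp
          then have "of_int p \<le> (0::real)" by simp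
          moreover have "\<rho> = \<gamma>" using True by (simp add: \<rho>_def)
          ultimately show False using cl hyp0 yR \<open>r = of_int p\<close> by simp
        next
          case False
          then have q2: "real_of_int q \<ge> 2" using q1 by simp
          have rho4: "\<rho> \<le> 1 / (8 * real_of_int q ^ 2)"
          proof -
            have "real_of_int q powr 4 \<le> real_of_int q powr (\<tau> + 1)" using qr t3 by (intro powr_mono) auto
            moreover have "real_of_int q powr 4 = real_of_int q ^ 4" using qpos by (rule_tac powr_numeral) simp
            moreover have "real_of_int q ^ 4 \<ge> 4 * real_of_int q ^ 2"
            proof -
              have "real_of_int q ^ 2 \<ge> (4::real)" using mult_mono[OF q2 q2] qr by (simp add: power2_eq_square)
              then have "real_of_int q ^ 2 * real_of_int q ^ 2 \<ge> 4 * real_of_int q ^ 2" by (intro mult_right_mono) auto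
              then show ?thesis by (simp flip: power_add)
            qed
            ultimately have A: "real_of_int q powr (\<tau> + 1) \<ge> 4 * real_of_int q ^ 2" by simp
            have "\<rho> \<le> \<gamma> / (4 * real_of_int q ^ 2)" unfolding \<rho>_def using A qpos g0
              by (intro divide_left_mono) auto
            also have "\<dots> \<le> (1/2) / (4 * real_of_int q ^ 2)" using g12 qpos by (intro divide_right_mono) auto
            finally show ?thesis by simp
          qed
          have Q2: "1 / Q^2 \<le> 1 / (16 * real_of_int q ^ 2)"
          proof -
            have h4: "real_of_int q ^ 2 \<ge> (4::real)" using mult_mono[OF q2 q2] qr by (simp add: power2_eq_square)
            have "real_of_int q ^ 3 < Q" using q3 qtQ by simp
            then have A: "(real_of_int q ^ 3) ^ 2 \<le> Q ^ 2" using qpos by (intro power_mono) auto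
            have B: "(real_of_int q ^ 3) ^ 2 = real_of_int q ^ 2 * (real_of_int q ^ 2 * real_of_int q ^ 2)" by (simp flip: power_add power_mult)
            have C: "real_of_int q ^ 2 * real_of_int q ^ 2 \<ge> 4 * 4" using mult_mono[OF h4 h4] by simp
            have "real_of_int q ^ 2 * (4 * 4) \<le> real_of_int q ^ 2 * (real_of_int q ^ 2 * real_of_int q ^ 2)"
              by (rule mult_left_mono[OF C]) simp
            then have "16 * real_of_int q ^ 2 \<le> Q^2" using A B by simp
            then show ?thesis using qpos Qpos by (intro divide_left_mono) auto
          qed
          have ar0: "0 < \<alpha> - of_int p / real_of_int q" using 5 aB0 by (simp add: r_def)
          have "\<alpha> - r = (\<alpha> - B) + (B - r)" by simp
          moreover have "B - r \<le> 1 / (2 * Q^2) + \<rho>" using cl yR R_d by simp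
          ultimately have "\<alpha> - r < 3 / 2 * (1 / Q^2) + \<rho>" using aB1 by simp
          also have "\<dots> \<le> 3 / 2 * (1 / (16 * real_of_int q ^ 2)) + 1 / (8 * real_of_int q ^ 2)" using Q2 rho4 by simp
          also have "\<dots> < 1 / (2 * real_of_int q ^ 2)" using qpos by (simp add: field_simps)
          finally have ar1: "\<alpha> - of_int p / real_of_int q < 1 / (2 * real_of_int q ^ 2)" by (simp add: r_def)
          obtain n where en: "even n" and Qn: "QQ \<alpha> (Suc n) \<le> real_of_int q"
            and eqn: "of_int p * QQ \<alpha> (Suc n) = PP \<alpha> (Suc n) * real_of_int q"
            using legendre[OF irr a0 a1 q1 ar0 ar1] by blast
          have Qn1: "QQ \<alpha> (Suc n) \<ge> 1" by (rule QQ_ge1[OF irr a0 a1]) simp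
          have nm: "n < m"
          proof (rule ccontr)
            assume "\<not> n < m"
            then have "Q \<le> QQ \<alpha> (Suc n)" unfolding Q_def by (intro QQ_mono[OF irr a0 a1]) simp
            then show False using Qn qltQ by simp
          qed
          have rn: "r = PP \<alpha> (Suc n) / QQ \<alpha> (Suc n)" using eqn qpos Qn1 by (simp add: r_def field_simps)
          have "\<rho> \<le> \<gamma> / QQ \<alpha> (Suc n) powr (\<tau> + 1)" unfolding \<rho>_def
          proof (rule divide_left_mono)
            show "QQ \<alpha> (Suc n) powr (\<tau> + 1) \<le> real_of_int q powr (\<tau> + 1)" using Qn Qn1 t3 by (intro powr_mono2) auto
          qed (use g0 Qn1 qpos in auto)
          then have "y < PP \<alpha> (Suc n) / QQ \<alpha> (Suc n) + \<gamma> / QQ \<alpha> (Suc n) powr (\<tau> + 1)" using cl rn by simp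
          also have "\<dots> < R - \<delta>" using hypm[OF en nm] by (simp add: R_def \<delta>_def B_def Q_def Pm_def)
          finally show False using yR by simp
        qed
      qed
    qed
    have msmall: "2 * \<gamma> * (R - (R - \<delta>)) / real N powr (\<tau> - 1) + 6 * \<gamma> / real N powr \<tau> < R - (R - \<delta>)"
    proof -
      have e1: "2 * \<gamma> * \<delta> / Q powr (\<tau> - 1) = \<delta> * \<delta>" by (simp add: \<delta>_def)
      have "Q powr (\<tau> - 1) * Q powr 1 = Q powr (\<tau> - 1 + 1)" by (simp only: powr_add)
      then have Qt: "Q powr \<tau> = Q powr (\<tau> - 1) * Q" using Qpos by simp
      have e2: "6 * \<gamma> / Q powr \<tau> = 3 * \<delta> / Q" unfolding Qt \<delta>_def using Qpos by (simp add: field_simps)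
      have "\<gamma> / Q powr (\<tau> + 1) \<ge> 0" using g0 by simp
      then have "\<delta> \<le> 1 / (2 * Q^2)" using c1 by linarith
      also have "\<dots> \<le> 1 / 32" using Q4
      proof -
        have "Q^2 \<ge> 16" using mult_mono[OF Q4 Q4] Qpos by (simp add: power2_eq_square)
        then have "1 / (2 * Q^2) \<le> 1 / (2 * 16)" by (intro divide_left_mono) auto
        then show ?thesis by simp
      qed
      finally have dd: "\<delta> \<le> 1 / 32" .
      have "\<delta> * \<delta> \<le> \<delta> * (1 / 32)" by (rule mult_left_mono[OF dd]) (use d0 in simp)
      then have X: "\<delta> * \<delta> \<le> \<delta> / 32" by simp
      have Y: "3 * \<delta> / Q \<le> 3 * \<delta> / 4" using Q4 d0 by (intro divide_left_mono) auto
      have fin: "\<delta> * \<delta> + 3 * \<delta> / Q < \<delta>" using X Y d0 by linarith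
      show ?thesis unfolding QN[symmetric] using fin e1 e2 by simp
    qed
    obtain y where yT: "y \<in> {R - \<delta>..R}" and ylarge: "\<And>q p :: int. real_of_int q > real N \<Longrightarrow>
            \<bar>y - of_int p / real_of_int q\<bar> \<ge> \<gamma> / real_of_int q powr (\<tau> + 1)"
      using measure_avoid[of "R - \<delta>" R \<gamma> \<tau> N, OF _ g0 g12 t3 N1 msmall] d0 by auto
    have yD: "y \<in> Dioph \<gamma> \<tau>"
    proof (rule Dioph_I)
      show "0 < y" using yT hyp0 g0 by simp
      have "R < B" using g0 Qpos by (simp add: R_def)
      then show "y < 1" using yT aB0 a1 by simp
      show "\<bar>y - of_int p / real_of_int q\<bar> \<ge> \<gamma> / real_of_int q powr (\<tau> + 1)" if "q \<ge> 1" for q p :: int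
      proof (cases "real_of_int q \<le> Q")
        case True then show ?thesis using small[OF yT that] by simp
      next
        case False then show ?thesis using ylarge QN by simp
      qed
    qed
    have RB: "R < B" using g0 Qpos by (simp add: R_def)
    have "\<alpha> - y \<le> (\<alpha> - B) + (B - (R - \<delta>))" using yT by simp
    also have "\<dots> < 1 / Q^2 + 1 / (2 * Q^2)" using aB1 R_d by simp
    also have "\<dots> \<le> 2 / Q"
    proof -
      have "1 / Q^2 \<le> 1 / Q" using Q1 by (simp add: power2_eq_square frac_le)
      moreover have "1 / (2 * Q^2) \<le> 1 / Q" using Q1 by (simp add: power2_eq_square frac_le)
      ultimately show ?thesis by simp
    qed
    also have "\<dots> \<le> \<epsilon>"
    proof -
      have "2 / \<epsilon> \<le> Q" using M0e QM by simp
      then show ?thesis using e0 Qpos by (simp add: field_simps)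
    qed
    finally have "\<alpha> - y < \<epsilon>" .
    moreover have "y < \<alpha>" using yT RB aB0 by simp
    ultimately show "\<exists>x'\<in>Dioph \<gamma> \<tau>. x' \<noteq> \<alpha> \<and> dist x' \<alpha> < \<epsilon>"
      using yD by (intro bexI[of _ y]) (auto simp: dist_real_def)
  qed
qed

end
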